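(* Let a hinge $\Diamond_{ij;kl}$ (edge $e_{ij}$ with faces $f_{ijk},f_{ijl}$) carry radii $p,q,r,s>0$ at $v_k,v_i,v_l,v_j$ and inversive distances $a,b,c,d,e>1$ at $e_{ki},e_{il},e_{lj},e_{jk},e_{ij}$, and let the edge lengths be $u=\sqrt{p^2+q^2+2apq}$, $v=\sqrt{q^2+r^2+2bqr}$, $w=\sqrt{r^2+s^2+2crs}$, $x=\sqrt{s^2+p^2+2dsp}$, $y=\sqrt{q^2+s^2+2eqs}$. Suppose the faces $f_{ijk}$ (sides $u,x,y$) and $f_{ijl}$ (sides $v,w,y$) satisfy the triangle inequalities, develop the hinge into $\mathbb{E}^2$, and let $z=d_{\mathbb{E}}(v_k,v_l)$. Let $F=\frac{z^2-p^2-r^2}{2pr}$ and $f=\frac{ab+cd+ace+bde+\sqrt{\Delta_{ade}}\sqrt{\Delta_{bce}}}{e^2-1}$ with $\Delta_{xyz}=x^2+y^2+z^2+2xyz-1$, regarded as functions of the nine variables $p,q,r,s,a,b,c,d,e$. At any point where \[\frac{\sqrt{\Delta_{bce}}}{p}+\frac{\sqrt{\Delta_{ade}}}{r}=\frac{\sqrt{\Delta_{cdf}}}{q}+\frac{\sqrt{\Delta_{abf}}}{s}\] holds, we have $dF=df$. *)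

theory Defs
  imports "HOL-Analysis.Analysis"
begin

definition Delta :: "real \<Rightarrow> real \<Rightarrow> real \<Rightarrow> real" where
  "Delta x y z = x^2 + y^2 + z^2 + 2*x*y*z - 1"

definition idlen :: "real \<Rightarrow> real \<Rightarrow> real \<Rightarrow> real" where
  "idlen r1 r2 I = sqrt (r1^2 + r2^2 + 2*I*r1*r2)"

text \<open>Development of the hinge into the plane: v_i = (0,0), v_j = (y,0),
  v_k in the upper half plane with |v_k v_i| = u, |v_k v_j| = x,
  v_l in the lower half plane with |v_l v_i| = v, |v_l v_j| = w.\<close>
definition vk :: "real \<Rightarrow> real \<Rightarrow> real \<Rightarrow> real \<Rightarrow> real \<Rightarrow> real \<Rightarrow> real \<Rightarrow> real \<Rightarrow> real \<Rightarrow> real \<times> real" where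
  "vk p q r s a b c d e =
     (let u = idlen p q a; x = idlen s p d; y = idlen q s e;
          h = (u^2 + y^2 - x^2) / (2*y)
      in (h, sqrt (u^2 - h^2)))"

definition vl :: "real \<Rightarrow> real \<Rightarrow> real \<Rightarrow> real \<Rightarrow> real \<Rightarrow> real \<Rightarrow> real \<Rightarrow> real \<Rightarrow> real \<Rightarrow> real \<times> real" where
  "vl p q r s a b c d e =
     (let v = idlen q r b; w = idlen r s c; y = idlen q s e;
          h = (v^2 + y^2 - w^2) / (2*y)
      in (h, - sqrt (v^2 - h^2)))"

definition hinge_z :: "real \<Rightarrow> real \<Rightarrow> real \<Rightarrow> real \<Rightarrow> real \<Rightarrow> real \<Rightarrow> real \<Rightarrow> real \<Rightarrow> real \<Rightarrow> real" where
  "hinge_z p q r s a b c d e = dist (vk p q r s a b c d e) (vl p q r s a b c d e)"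

definition F_hinge :: "real \<Rightarrow> real \<Rightarrow> real \<Rightarrow> real \<Rightarrow> real \<Rightarrow> real \<Rightarrow> real \<Rightarrow> real \<Rightarrow> real \<Rightarrow> real" where
  "F_hinge p q r s a b c d e = ((hinge_z p q r s a b c d e)^2 - p^2 - r^2) / (2*p*r)"

definition f_hinge :: "real \<Rightarrow> real \<Rightarrow> real \<Rightarrow> real \<Rightarrow> real \<Rightarrow> real \<Rightarrow> real \<Rightarrow> real \<Rightarrow> real \<Rightarrow> real" where
  "f_hinge p q r s a b c d e =
     (a*b + c*d + a*c*e + b*d*e + sqrt (Delta a d e) * sqrt (Delta b c e)) / (e^2 - 1)"

definition F9 :: "real^9 \<Rightarrow> real" where
  "F9 X = F_hinge (X$1) (X$2) (X$3) (X$4) (X$5) (X$6) (X$7) (X$8) (X$9)"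

definition f9 :: "real^9 \<Rightarrow> real" where
  "f9 X = f_hinge (X$1) (X$2) (X$3) (X$4) (X$5) (X$6) (X$7) (X$8) (X$9)"

definition tri_ineq :: "real \<Rightarrow> real \<Rightarrow> real \<Rightarrow> bool" where
  "tri_ineq l1 l2 l3 \<longleftrightarrow> l1 < l2 + l3 \<and> l2 < l1 + l3 \<and> l3 < l1 + l2"

end

theory Submission
  imports Defs
begin
lemma sq_gt1: "(e::real) > 1 \<Longrightarrow> e^2 > 1"
  by (simp add: one_less_power)

lemma delta_pos: "(a::real) > 1 \<Longrightarrow> d > 1 \<Longrightarrow> e > 1 \<Longrightarrow> Delta a d e > 0"
  unfolding Delta_def
proof -
  assume "a > 1" "d > 1" "e > 1"
  then have "a*d*e > 0" by simp
  moreover have "a^2 > 1" using \<open>a>1\<close> by (rule sq_gt1)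
  ultimately show "a\<^sup>2 + d\<^sup>2 + e\<^sup>2 + 2 * a * d * e - 1 > 0"
    using zero_le_power2[of d] zero_le_power2[of e] by linarith
qed

lemma Delta_div:
  fixes c d t E :: real
  assumes "E \<noteq> 0"
  shows "Delta c d (t / E) = (E^2*(c^2+d^2-1) + t^2 + 2*c*d*E*t) / E^2"
  using assms unfolding Delta_def by (simp add: field_simps power2_eq_square)

lemma polyC:
  fixes a b c d e w :: real
  shows "(e^2-1)^2*(c^2+d^2-1) + (a*b + c*d + a*c*e + b*d*e)^2 + 2*(a*b + c*d + a*c*e + b*d*e)*w
     + Delta a d e * Delta b c e + 2*c*d*(e^2-1)*((a*b + c*d + a*c*e + b*d*e) + w)
   = (a+d*e)^2 * Delta b c e + 2*(a+d*e)*(b+c*e)*w + (b+c*e)^2 * Delta a d e"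
  unfolding Delta_def by algebra

lemma polyD:
  fixes a b c d e w :: real
  shows "(e^2-1)^2*(a^2+b^2-1) + (a*b + c*d + a*c*e + b*d*e)^2 + 2*(a*b + c*d + a*c*e + b*d*e)*w
     + Delta a d e * Delta b c e + 2*a*b*(e^2-1)*((a*b + c*d + a*c*e + b*d*e) + w)
   = (d+a*e)^2 * Delta b c e + 2*(d+a*e)*(c+b*e)*w + (c+b*e)^2 * Delta a d e"
  unfolding Delta_def by algebra

lemma sqrt_C:
  fixes a b c d e SA SB :: real
  assumes "e > 1" and hA: "SA^2 = Delta a d e" and hB: "SB^2 = Delta b c e"
  shows "Delta c d ((a*b + c*d + a*c*e + b*d*e + SA * SB) / (e^2 - 1))
       = (((a+d*e)*SB + (b+c*e)*SA)/(e^2-1))^2"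
proof -
  have ne: "e^2 - 1 \<noteq> 0" using sq_gt1[OF assms(1)] by linarith
  have 1: "(a*b + c*d + a*c*e + b*d*e + SA * SB)^2 = (a*b + c*d + a*c*e + b*d*e)^2
      + 2*(a*b + c*d + a*c*e + b*d*e)*(SA*SB) + Delta a d e * Delta b c e"
    unfolding hA[symmetric] hB[symmetric] by algebra
  have 2: "((a+d*e)*SB + (b+c*e)*SA)^2 = (a+d*e)^2 * Delta b c e + 2*(a+d*e)*(b+c*e)*(SA*SB) + (b+c*e)^2 * Delta a d e"
    unfolding hA[symmetric] hB[symmetric] by algebra
  show ?thesis
    unfolding Delta_div[OF ne] power_divide 1 2 polyC[symmetric]
    by (simp add: algebra_simps)
qed

lemma sqrt_D:
  fixes a b c d e SA SB :: real
  assumes "e > 1" and hA: "SA^2 = Delta a d e" and hB: "SB^2 = Delta b c e"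
  shows "Delta a b ((a*b + c*d + a*c*e + b*d*e + SA * SB) / (e^2 - 1))
       = (((d+a*e)*SB + (c+b*e)*SA)/(e^2-1))^2"
proof -
  have ne: "e^2 - 1 \<noteq> 0" using sq_gt1[OF assms(1)] by linarith
  have 1: "(a*b + c*d + a*c*e + b*d*e + SA * SB)^2 = (a*b + c*d + a*c*e + b*d*e)^2
      + 2*(a*b + c*d + a*c*e + b*d*e)*(SA*SB) + Delta a d e * Delta b c e"
    unfolding hA[symmetric] hB[symmetric] by algebra
  have 2: "((d+a*e)*SB + (c+b*e)*SA)^2 = (d+a*e)^2 * Delta b c e + 2*(d+a*e)*(c+b*e)*(SA*SB) + (c+b*e)^2 * Delta a d e"
    unfolding hA[symmetric] hB[symmetric] by algebra
  show ?thesis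
    unfolding Delta_div[OF ne] power_divide 1 2 polyD[symmetric]
    by (simp add: algebra_simps)
qed

definition gg :: "real \<Rightarrow> real \<Rightarrow> real \<Rightarrow> real \<Rightarrow> real \<Rightarrow> real \<Rightarrow> real" where
  "gg x1 y1 r1 x2 y2 r2 = (r1^2 + r2^2 - ((x1-x2)^2 + (y1-y2)^2)) / (2*r1*r2)"

lemma bil_poly:
  fixes x1 x2 x3 x4 y1 y2 y3 y4 r1 r2 r3 r4 a1 a2 a3 a4 b1 b2 b3 b4 :: real
  shows "2*(a1*b1*(2*r1^2) + a2*b2*(2*r2^2) + a3*b3*(2*r3^2) + a4*b4*(2*r4^2))
    + 2*(r1^2 + r2^2 - ((x1-x2)^2 + (y1-y2)^2))*(a1*b2+a2*b1)
    + 2*(r1^2 + r3^2 - ((x1-x3)^2 + (y1-y3)^2))*(a1*b3+a3*b1)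
    + 2*(r1^2 + r4^2 - ((x1-x4)^2 + (y1-y4)^2))*(a1*b4+a4*b1)
    + 2*(r2^2 + r3^2 - ((x2-x3)^2 + (y2-y3)^2))*(a2*b3+a3*b2)
    + 2*(r2^2 + r4^2 - ((x2-x4)^2 + (y2-y4)^2))*(a2*b4+a4*b2)
    + 2*(r3^2 + r4^2 - ((x3-x4)^2 + (y3-y4)^2))*(a3*b4+a4*b3)
  = 4*(a1*x1+a2*x2+a3*x3+a4*x4)*(b1*x1+b2*x2+b3*x3+b4*x4)
    + 4*(a1*y1+a2*y2+a3*y3+a4*y4)*(b1*y1+b2*y2+b3*y3+b4*y4)
    - 2*((a1+a2+a3+a4)*(b1*(x1^2+y1^2-r1^2)+b2*(x2^2+y2^2-r2^2)+b3*(x3^2+y3^2-r3^2)+b4*(x4^2+y4^2-r4^2))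
       + (b1+b2+b3+b4)*(a1*(x1^2+y1^2-r1^2)+a2*(x2^2+y2^2-r2^2)+a3*(x3^2+y3^2-r3^2)+a4*(x4^2+y4^2-r4^2)))"
  by algebra

lemma gg_term:
  fixes x1 y1 r1 x2 y2 r2 n1 n2 m1 m2 :: real
  assumes "r1 \<noteq> 0" "r2 \<noteq> 0"
  shows "gg x1 y1 r1 x2 y2 r2 * (n1*m2 + n2*m1) =
     2*(r1^2 + r2^2 - ((x1-x2)^2 + (y1-y2)^2))*((n1/(2*r1))*(m2/(2*r2)) + (n2/(2*r2))*(m1/(2*r1)))"
  using assms unfolding gg_def by (simp add: field_simps)

lemma diag_term:
  fixes r n m :: real
  assumes "r \<noteq> 0"
  shows "n*m = 2*((n/(2*r))*(m/(2*r))*(2*r^2))"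
  using assms by (simp add: field_simps power2_eq_square)

lemma bil:
  fixes x_a x_b x_c x_d y_a y_b y_c y_d r_a r_b r_c r_d n_a n_b n_c n_d m_a m_b m_c m_d :: real
  assumes "r_a \<noteq> 0" "r_b \<noteq> 0" "r_c \<noteq> 0" "r_d \<noteq> 0"
  shows "(n_a*m_a + n_b*m_b + n_c*m_c + n_d*m_d)
    + gg x_a y_a r_a x_b y_b r_b * (n_a*m_b+n_b*m_a)
    + gg x_a y_a r_a x_c y_c r_c * (n_a*m_c+n_c*m_a)
    + gg x_a y_a r_a x_d y_d r_d * (n_a*m_d+n_d*m_a)
    + gg x_b y_b r_b x_c y_c r_c * (n_b*m_c+n_c*m_b)
    + gg x_b y_b r_b x_d y_d r_d * (n_b*m_d+n_d*m_b)
    + gg x_c y_c r_c x_d y_d r_d * (n_c*m_d+n_d*m_c)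
  = 4*(n_a/(2*r_a)*x_a+n_b/(2*r_b)*x_b+n_c/(2*r_c)*x_c+n_d/(2*r_d)*x_d)*(m_a/(2*r_a)*x_a+m_b/(2*r_b)*x_b+m_c/(2*r_c)*x_c+m_d/(2*r_d)*x_d)
    + 4*(n_a/(2*r_a)*y_a+n_b/(2*r_b)*y_b+n_c/(2*r_c)*y_c+n_d/(2*r_d)*y_d)*(m_a/(2*r_a)*y_a+m_b/(2*r_b)*y_b+m_c/(2*r_c)*y_c+m_d/(2*r_d)*y_d)
    - 2*((n_a/(2*r_a)+n_b/(2*r_b)+n_c/(2*r_c)+n_d/(2*r_d))*(m_a/(2*r_a)*(x_a^2+y_a^2-r_a^2)+m_b/(2*r_b)*(x_b^2+y_b^2-r_b^2)+m_c/(2*r_c)*(x_c^2+y_c^2-r_c^2)+m_d/(2*r_d)*(x_d^2+y_d^2-r_d^2))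
       + (m_a/(2*r_a)+m_b/(2*r_b)+m_c/(2*r_c)+m_d/(2*r_d))*(n_a/(2*r_a)*(x_a^2+y_a^2-r_a^2)+n_b/(2*r_b)*(x_b^2+y_b^2-r_b^2)+n_c/(2*r_c)*(x_c^2+y_c^2-r_c^2)+n_d/(2*r_d)*(x_d^2+y_d^2-r_d^2)))"
  unfolding gg_term[OF assms(1,2)] gg_term[OF assms(1,3)] gg_term[OF assms(1,4)]
    gg_term[OF assms(2,3)] gg_term[OF assms(2,4)] gg_term[OF assms(3,4)]
    diag_term[OF assms(1), of n_a m_a] diag_term[OF assms(2), of n_b m_b]
    diag_term[OF assms(3), of n_c m_c] diag_term[OF assms(4), of n_d m_d]
  by (rule trans[OF _ bil_poly]) (simp add: algebra_simps)

lemma idsq_pos: "(r1::real) > 0 \<Longrightarrow> r2 > 0 \<Longrightarrow> I > 0 \<Longrightarrow> r1^2 + r2^2 + 2*I*r1*r2 > 0"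
  by (simp add: add_pos_pos)

lemma idlen_sq: "(r1::real) > 0 \<Longrightarrow> r2 > 0 \<Longrightarrow> I > 0 \<Longrightarrow> (idlen r1 r2 I)^2 = r1^2 + r2^2 + 2*I*r1*r2"
  unfolding idlen_def using idsq_pos[of r1 r2 I] by simp

lemma idlen_pos: "(r1::real) > 0 \<Longrightarrow> r2 > 0 \<Longrightarrow> I > 0 \<Longrightarrow> idlen r1 r2 I > 0"
  unfolding idlen_def using idsq_pos[of r1 r2 I] by simp

lemma hinge_main:
  fixes p q r s a b c d e :: real
  assumes pos: "p > 0" "q > 0" "r > 0" "s > 0"
    and gt: "a > 1" "b > 1" "c > 1" "d > 1" "e > 1"
    and P1: "0 < 4*(p^2+q^2+2*a*p*q)*(q^2+s^2+2*e*q* s) - ((p^2+q^2+2*a*p*q) + (q^2+s^2+2*e*q* s) - (s^2+p^2+2*d* s*p))^2"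
    and P2: "0 < 4*(q^2+r^2+2*b*q*r)*(q^2+s^2+2*e*q* s) - ((q^2+r^2+2*b*q*r) + (q^2+s^2+2*e*q* s) - (r^2+s^2+2*c*r* s))^2"
  shows "F_hinge p q r s a b c d e \<le> f_hinge p q r s a b c d e \<and>
    (sqrt (Delta b c e) / p + sqrt (Delta a d e) / r =
               sqrt (Delta c d (f_hinge p q r s a b c d e)) / q
             + sqrt (Delta a b (f_hinge p q r s a b c d e)) / s
     \<longrightarrow> F_hinge p q r s a b c d e = f_hinge p q r s a b c d e)"
proof -
  have a0: "a > 0" "b > 0" "c > 0" "d > 0" "e > 0" using gt by auto
  define u where "u = idlen p q a"
  define x where "x = idlen s p d"
  define y where "y = idlen q s e"
  define v where "v = idlen q r b"
  define w where "w = idlen r s c"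
  have u2: "u^2 = p^2+q^2+2*a*p*q" unfolding u_def using pos a0 by (simp add: idlen_sq)
  have x2: "x^2 = s^2+p^2+2*d* s*p" unfolding x_def using pos a0 by (simp add: idlen_sq)
  have y2: "y^2 = q^2+s^2+2*e*q* s" unfolding y_def using pos a0 by (simp add: idlen_sq)
  have v2: "v^2 = q^2+r^2+2*b*q*r" unfolding v_def using pos a0 by (simp add: idlen_sq)
  have w2: "w^2 = r^2+s^2+2*c*r* s" unfolding w_def using pos a0 by (simp add: idlen_sq)
  have ypos: "y > 0" unfolding y_def using pos a0 by (simp add: idlen_pos)
  define h1 where "h1 = (u^2 + y^2 - x^2) / (2*y)"
  define h2 where "h2 = (v^2 + y^2 - w^2) / (2*y)"
  have K1: "u^2 - h1^2 = (4*u^2*y^2 - (u^2+y^2-x^2)^2) / (4*y^2)"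
    unfolding h1_def using ypos by (simp add: field_simps power2_eq_square)
  have K2: "v^2 - h2^2 = (4* v^2*y^2 - (v^2+y^2-w^2)^2) / (4*y^2)"
    unfolding h2_def using ypos by (simp add: field_simps power2_eq_square)
  have "4*u^2*y^2 - (u^2+y^2-x^2)^2 > 0" unfolding u2 x2 y2 using P1 .
  then have K1pos: "u^2 - h1^2 > 0" unfolding K1 using ypos by simp
  have "4* v^2*y^2 - (v^2+y^2-w^2)^2 > 0" unfolding v2 w2 y2 using P2 .
  then have K2pos: "v^2 - h2^2 > 0" unfolding K2 using ypos by simp
  define k1 where "k1 = sqrt (u^2 - h1^2)"
  define k2 where "k2 = sqrt (v^2 - h2^2)"
  have k1pos: "k1 > 0" and k1sq: "k1^2 = u^2 - h1^2" unfolding k1_def using K1pos by auto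
  have k2pos: "k2 > 0" and k2sq: "k2^2 = v^2 - h2^2" unfolding k2_def using K2pos by auto
  have vk: "vk p q r s a b c d e = (h1, k1)"
    unfolding vk_def Let_def u_def[symmetric] x_def[symmetric] y_def[symmetric] h1_def[symmetric] k1_def ..
  have vl: "vl p q r s a b c d e = (h2, - k2)"
    unfolding vl_def Let_def v_def[symmetric] w_def[symmetric] y_def[symmetric] h2_def[symmetric] k2_def ..
  have z2: "(hinge_z p q r s a b c d e)^2 = (h1-h2)^2 + (k1+k2)^2"
    unfolding hinge_z_def vk vl dist_Pair_Pair dist_real_def by simp
  define F where "F = F_hinge p q r s a b c d e"
  have Fdef: "F = ((h1-h2)^2 + (k1+k2)^2 - p^2 - r^2) / (2*p*r)"
    unfolding F_def F_hinge_def z2 ..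
  have hy: "2*h1*y = u^2+y^2-x^2" unfolding h1_def using ypos by simp
  have hy2: "2*h2*y = v^2+y^2-w^2" unfolding h2_def using ypos by simp
  have g12: "gg h1 k1 p 0 0 q = -a"
  proof -
    have "h1^2 + k1^2 = p^2+q^2+2*a*p*q" using k1sq u2 by simp
    then show ?thesis unfolding gg_def using pos by (simp add: field_simps)
  qed
  have g13: "gg h1 k1 p h2 (-k2) r = -F"
    unfolding gg_def Fdef using pos by (simp add: field_simps)
  have g14: "gg h1 k1 p y 0 s = -d"
  proof -
    have "(h1-y)^2 + k1^2 = s^2+p^2+2*d* s*p"
      using k1sq hy x2 by (simp add: power2_eq_square algebra_simps)
    then show ?thesis unfolding gg_def using pos by (simp add: field_simps)
  qed
  have g23: "gg 0 0 q h2 (-k2) r = -b"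
  proof -
    have "h2^2 + k2^2 = q^2+r^2+2*b*q*r" using k2sq v2 by simp
    then show ?thesis unfolding gg_def using pos by (simp add: field_simps)
  qed
  have g24: "gg 0 0 q y 0 s = -e"
    unfolding gg_def using pos y2 by (simp add: field_simps)
  have g34: "gg h2 (-k2) r y 0 s = -c"
  proof -
    have "(h2-y)^2 + k2^2 = r^2+s^2+2*c*r* s"
      using k2sq hy2 w2 by (simp add: power2_eq_square algebra_simps)
    then show ?thesis unfolding gg_def using pos by (simp add: field_simps)
  qed

  have Apos: "Delta a d e > 0" using delta_pos[of a d e] gt by simp
  have Bpos: "Delta b c e > 0" using delta_pos[of b c e] gt by simp
  define SA where "SA = sqrt (Delta a d e)"
  define SB where "SB = sqrt (Delta b c e)"
  have SApos: "SA > 0" and hA: "SA^2 = Delta a d e" unfolding SA_def using Apos by auto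
  have SBpos: "SB > 0" and hB: "SB^2 = Delta b c e" unfolding SB_def using Bpos by auto
  have Epos: "e^2 - 1 > 0" using sq_gt1[OF gt(5)] by simp
  then have ne: "e^2 - 1 \<noteq> 0" by simp
  define fv where "fv = f_hinge p q r s a b c d e"
  have fvdef: "fv = (a*b + c*d + a*c*e + b*d*e + SA*SB)/(e^2-1)"
    unfolding fv_def f_hinge_def SA_def SB_def ..
  define SC where "SC = sqrt (Delta c d fv)"
  define SD where "SD = sqrt (Delta a b fv)"
  have SCeq: "SC = ((a+d*e)*SB + (b+c*e)*SA)/(e^2-1)"
  proof -
    have nn: "0 \<le> ((a+d*e)*SB + (b+c*e)*SA)/(e^2-1)"
      using Epos SApos SBpos a0 by (simp add: add_pos_pos less_imp_le)
    show ?thesis unfolding SC_def fvdef sqrt_C[OF gt(5) hA hB] real_sqrt_abs using abs_of_nonneg[OF nn] .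
  qed
  have SDeq: "SD = ((d+a*e)*SB + (c+b*e)*SA)/(e^2-1)"
  proof -
    have nn: "0 \<le> ((d+a*e)*SB + (c+b*e)*SA)/(e^2-1)"
      using Epos SApos SBpos a0 by (simp add: add_pos_pos less_imp_le)
    show ?thesis unfolding SD_def fvdef sqrt_D[OF gt(5) hA hB] real_sqrt_abs using abs_of_nonneg[OF nn] .
  qed
  have cE: "SC*(e^2-1) = (a+d*e)*SB + (b+c*e)*SA" using SCeq ne by simp
  have dE: "SD*(e^2-1) = (d+a*e)*SB + (c+b*e)*SA" using SDeq ne by simp
  have fE: "fv*(e^2-1) = a*b + c*d + a*c*e + b*d*e + SA*SB" using fvdef ne by simp
  have "(e^2-1)*(SB + a*SC - fv*SA + d*SD) = 0"
    using cE dE fE hA unfolding Delta_def by algebra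
  then have rk: "SB + a*SC - fv*SA + d*SD = 0" using ne by simp
  have "(e^2-1)*(- fv*SB + b*SC + SA + c*SD) = 0"
    using cE dE fE hB unfolding Delta_def by algebra
  then have rl: "- fv*SB + b*SC + SA + c*SD = 0" using ne by simp
  have "(e^2-1)*(- a*SB - SC - b*SA + e*SD) = 0"
    using cE dE by algebra
  then have ri: "- a*SB - SC - b*SA + e*SD = 0" using ne by simp
  have "(e^2-1)*(- d*SB + e*SC - c*SA - SD) = 0"
    using cE dE by algebra
  then have rj: "- d*SB + e*SC - c*SA - SD = 0" using ne by simp
  have pne: "p \<noteq> 0" "q \<noteq> 0" "r \<noteq> 0" "s \<noteq> 0" using pos by auto
  note ggs = g12 g13 g14 g23 g24 g34
  define S where "S = SB/p - SC/q + SA/r - SD/s"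
  define t where "t = - S / (1/q + 1/s)"
  have qs: "1/q + 1/s > 0" using pos by (simp add: add_pos_pos)
  have T0: "SB/(2*p) + (- SC + t)/(2*q) + SA/(2*r) + (- SD + t)/(2* s) = 0"
  proof -
    have "t * (1/q + 1/s) = - S" unfolding t_def using qs by simp
    moreover have "SB/(2*p) + (- SC + t)/(2*q) + SA/(2*r) + (- SD + t)/(2* s) = (S + t * (1/q + 1/s))/2"
      unfolding S_def using pos by (simp add: field_simps)
    ultimately show ?thesis by simp
  qed
  note inst = bil[OF pne, where x_a=h1 and x_b=0 and x_c=h2 and x_d=y and y_a=k1 and y_b=0 and y_c="-k2" and y_d=0
     and n_a=SB and n_b="- SC + t" and n_c=SA and n_d="- SD + t"
     and m_a=SB and m_b="- SC + t" and m_c=SA and m_d="- SD + t", unfolded ggs T0]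
  have sqnn: "\<And>X Y Z W :: real. 0 \<le> 4*X*X + 4*Y*Y - 2*(0*Z + 0*W)" by simp
  have Q0: "0 \<le> (SB*SB + (- SC + t)*(- SC + t) + SA*SA + (- SD + t)*(- SD + t))
    + (-a) * (SB*(- SC + t)+(- SC + t)*SB)
    + (-F) * (SB*SA+SA*SB)
    + (-d) * (SB*(- SD + t)+(- SD + t)*SB)
    + (-b) * ((- SC + t)*SA+SA*(- SC + t))
    + (-e) * ((- SC + t)*(- SD + t)+(- SD + t)*(- SC + t))
    + (-c) * (SA*(- SD + t)+(- SD + t)*SA)"
    unfolding inst by (rule sqnn)
  have Qeq: "(SB*SB + (- SC + t)*(- SC + t) + SA*SA + (- SD + t)*(- SD + t))
    + (-a) * (SB*(- SC + t)+(- SC + t)*SB)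
    + (-F) * (SB*SA+SA*SB)
    + (-d) * (SB*(- SD + t)+(- SD + t)*SB)
    + (-b) * ((- SC + t)*SA+SA*(- SC + t))
    + (-e) * ((- SC + t)*(- SD + t)+(- SD + t)*(- SC + t))
    + (-c) * (SA*(- SD + t)+(- SD + t)*SA) = t^2*(2-2*e) + 2*SA*SB*(fv-F)"
    using rk rl ri rj by algebra
  have "0 \<le> 2*SA*SB*(fv-F)"
  proof -
    have "0 \<le> t^2*(2*e-2)" using gt by simp
    moreover have "t^2*(2-2*e) = - (t^2*(2*e-2))" by algebra
    ultimately show ?thesis using Q0 Qeq by linarith
  qed
  then have le: "F \<le> fv" using mult_pos_pos[OF SApos SBpos] by (auto simp: zero_le_mult_iff)
  have eqpart: "F = fv" if cnd: "SB/p + SA/r = SC/q + SD/s"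
  proof -
    have S0: "S = 0" unfolding S_def using cnd by simp
    have t0: "t = 0" unfolding t_def S0 by simp
    have T1: "SB/(2*p) + (- SC)/(2*q) + SA/(2*r) + (- SD)/(2* s) = 0" using T0 unfolding t0 by simp
    define X where "X = SB/(2*p)*h1 + (- SC)/(2*q)*0 + SA/(2*r)*h2 + (- SD)/(2* s)*y"
    define Y where "Y = SB/(2*p)*k1 + (- SC)/(2*q)*0 + SA/(2*r)*(-k2) + (- SD)/(2* s)*0"
    define Z where "Z = SB/(2*p)*(h1^2+k1^2-p^2) + (- SC)/(2*q)*(0^2+0^2-q^2) + SA/(2*r)*(h2^2+(-k2)^2-r^2) + (- SD)/(2* s)*(y^2+0^2-s^2)"
    note inst2 = bil[OF pne, where x_a=h1 and x_b=0 and x_c=h2 and x_d=y and y_a=k1 and y_b=0 and y_c="-k2" and y_d=0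
     and n_a=SB and n_b="- SC" and n_c=SA and n_d="- SD", unfolded ggs T1 X_def[symmetric] Y_def[symmetric] Z_def[symmetric]]
    have "Z = 0" using inst2[where m_a=0 and m_b=1 and m_c=0 and m_d=0] ri pne by (simp add: algebra_simps)
    moreover have "X = 0" using inst2[where m_a=0 and m_b=0 and m_c=0 and m_d=1] rj pne ypos \<open>Z = 0\<close> by (simp add: algebra_simps)
    ultimately have E1: "(fv - F)*SA = 2*Y*k1/p" and E3: "(fv - F)*SB = - 2*Y*k2/r"
      using inst2[where m_a=1 and m_b=0 and m_c=0 and m_d=0] inst2[where m_a=0 and m_b=0 and m_c=1 and m_d=0] rk rl pne
      by (simp_all add: algebra_simps)
    have "0 \<le> (fv-F)*SA" using le SApos by simp
    then have "0 \<le> 2*Y*k1/p" using E1 by simp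
    then have "Y \<ge> 0" using k1pos pos by (simp add: zero_le_mult_iff zero_le_divide_iff)
    have "0 \<le> (fv-F)*SB" using le SBpos by simp
    then have "0 \<le> - 2*Y*k2/r" using E3 by simp
    then have "Y \<le> 0"
    proof (rule contrapos_pp)
      assume "\<not> Y \<le> 0"
      then have "Y > 0" by simp
      then have "2*Y*k2/r > 0" using k2pos pos by simp
      then show "\<not> 0 \<le> - 2*Y*k2/r" by simp
    qed
    then have "(fv - F)*SA = 0" using E1 \<open>Y \<ge> 0\<close> by simp
    then show ?thesis using SApos by simp
  qed
  show ?thesis
    using le eqpart unfolding F_def fv_def SA_def SB_def SC_def SD_def by auto
qed

lemma K_pos:
  fixes u x y :: real
  assumes "y > 0" "0 < 4*u^2*y^2 - (u^2+y^2-x^2)^2"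
  shows "0 < u^2 - ((u^2+y^2-x^2)/(2*y))^2"
proof -
  have K1: "u^2 - ((u^2 + y^2 - x^2) / (2*y))^2 = (4*u^2*y^2 - (u^2+y^2-x^2)^2) / (4*y^2)"
    using assms(1) by (simp add: field_simps power2_eq_square)
  show ?thesis unfolding K1 using assms by simp
qed

lemma tri_P:
  fixes u x y :: real
  assumes "tri_ineq u x y"
  shows "0 < 4*u^2*y^2 - (u^2+y^2-x^2)^2"
proof -
  have "4*u^2*y^2 - (u^2+y^2-x^2)^2 = (x-u+y)*(x+u-y)*((u+y-x)*(u+y+x))"
    by algebra
  moreover have "0 < (x-u+y)*(x+u-y)*((u+y-x)*(u+y+x))"
    using assms(1) unfolding tri_ineq_def by (intro mult_pos_pos) auto
  ultimately show ?thesis by simp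
qed

lemma F_explicit: "F_hinge p q r s a b c d e =
  ((((idlen p q a)^2 + (idlen q s e)^2 - (idlen s p d)^2)/(2*idlen q s e)
     - ((idlen q r b)^2 + (idlen q s e)^2 - (idlen r s c)^2)/(2*idlen q s e))^2
   + (sqrt ((idlen p q a)^2 - (((idlen p q a)^2 + (idlen q s e)^2 - (idlen s p d)^2)/(2*idlen q s e))^2)
      + sqrt ((idlen q r b)^2 - (((idlen q r b)^2 + (idlen q s e)^2 - (idlen r s c)^2)/(2*idlen q s e))^2))^2
   - p^2 - r^2)/(2*p*r)"
  unfolding F_hinge_def hinge_z_def vk_def vl_def Let_def dist_Pair_Pair dist_real_def
  by simp

lemma vec_nth_differentiable: "(\<lambda>x. x $ i) differentiable F"
  by (rule bounded_linear_imp_differentiable) (rule bounded_linear_vec_nth)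

lemma sqrt_differentiable:
  assumes "f differentiable (at x)" "f x > 0"
  shows "(\<lambda>x. sqrt (f x)) differentiable (at x)"
  using assms has_derivative_real_sqrt unfolding differentiable_def by blast

theorem lemma5p4:
  fixes X :: "real^9" and p q r s a b c d e :: real
  assumes vars: "X$1 = p" "X$2 = q" "X$3 = r" "X$4 = s" "X$5 = a"
                "X$6 = b" "X$7 = c" "X$8 = d" "X$9 = e"
    and radii: "p > 0" "q > 0" "r > 0" "s > 0"
    and invd: "a > 1" "b > 1" "c > 1" "d > 1" "e > 1"
    and face_ijk: "tri_ineq (idlen p q a) (idlen s p d) (idlen q s e)"
    and face_ijl: "tri_ineq (idlen q r b) (idlen r s c) (idlen q s e)"
    and cond: "sqrt (Delta b c e) / p + sqrt (Delta a d e) / r =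
               sqrt (Delta c d (f_hinge p q r s a b c d e)) / q
             + sqrt (Delta a b (f_hinge p q r s a b c d e)) / s"
  shows "\<exists>D. (F9 has_derivative D) (at X) \<and> (f9 has_derivative D) (at X)"
proof -
  have a0: "a > 0" "b > 0" "c > 0" "d > 0" "e > 0" using invd by auto
  have ypos: "idlen q s e > 0" using radii a0 by (simp add: idlen_pos)
  note Pk = tri_P[OF face_ijk]
  note Pl = tri_P[OF face_ijl]
  have P1: "0 < 4*(p^2+q^2+2*a*p*q)*(q^2+s^2+2*e*q* s) - ((p^2+q^2+2*a*p*q) + (q^2+s^2+2*e*q* s) - (s^2+p^2+2*d* s*p))^2"
    using Pk unfolding idlen_sq[OF radii(1,2) a0(1)] idlen_sq[OF radii(4,1) a0(4)] idlen_sq[OF radii(2,4) a0(5)] .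
  have P2: "0 < 4*(q^2+r^2+2*b*q*r)*(q^2+s^2+2*e*q* s) - ((q^2+r^2+2*b*q*r) + (q^2+s^2+2*e*q* s) - (r^2+s^2+2*c*r* s))^2"
    using Pl unfolding idlen_sq[OF radii(2,3) a0(2)] idlen_sq[OF radii(3,4) a0(3)] idlen_sq[OF radii(2,4) a0(5)] .
  have K1: "0 < (idlen p q a)^2 - (((idlen p q a)^2 + (idlen q s e)^2 - (idlen s p d)^2) / (2*idlen q s e))^2"
    using K_pos[OF ypos Pk] .
  have K2: "0 < (idlen q r b)^2 - (((idlen q r b)^2 + (idlen q s e)^2 - (idlen r s c)^2) / (2*idlen q s e))^2"
    using K_pos[OF ypos Pl] .
  have "F9 differentiable (at X)"
    unfolding F9_def[abs_def] F_explicit idlen_def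
    apply (intro differentiable_divide differentiable_diff differentiable_add differentiable_mult
       differentiable_power sqrt_differentiable differentiable_const vec_nth_differentiable)
    using K1 K2 idsq_pos[OF radii(1,2) a0(1)] idsq_pos[OF radii(2,4) a0(5)] idsq_pos[OF radii(4,1) a0(4)]
      idsq_pos[OF radii(2,3) a0(2)] idsq_pos[OF radii(3,4) a0(3)] radii
    by (simp_all add: vars idlen_def)
  then obtain DF where DF: "(F9 has_derivative DF) (at X)" unfolding differentiable_def by blast
  have Apos: "Delta a d e > 0" using delta_pos[of a d e] invd by simp
  have Bpos: "Delta b c e > 0" using delta_pos[of b c e] invd by simp
  have Epos: "e^2 - 1 > 0" using sq_gt1[OF invd(5)] by simp
  have "f9 differentiable (at X)"
    unfolding f9_def[abs_def] f_hinge_def Delta_def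
    apply (intro differentiable_divide differentiable_diff differentiable_add differentiable_mult
       differentiable_power sqrt_differentiable differentiable_const vec_nth_differentiable)
    using Apos Bpos Epos unfolding Delta_def
    by (simp_all add: vars Delta_def)
  then obtain Df where Df: "(f9 has_derivative Df) (at X)" unfolding differentiable_def by blast
  define S where "S = {Y::real^9. 0 < Y$1 \<and> 0 < Y$2 \<and> 0 < Y$3 \<and> 0 < Y$4 \<and> 1 < Y$5 \<and> 1 < Y$6 \<and> 1 < Y$7 \<and> 1 < Y$8 \<and> 1 < Y$9 \<and>
     0 < 4*((Y$1)^2+(Y$2)^2+2*(Y$5)*(Y$1)*(Y$2))*((Y$2)^2+(Y$4)^2+2*(Y$9)*(Y$2)*(Y$4)) - (((Y$1)^2+(Y$2)^2+2*(Y$5)*(Y$1)*(Y$2)) + ((Y$2)^2+(Y$4)^2+2*(Y$9)*(Y$2)*(Y$4)) - ((Y$4)^2+(Y$1)^2+2*(Y$8)*(Y$4)*(Y$1)))^2 \<and>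
     0 < 4*((Y$2)^2+(Y$3)^2+2*(Y$6)*(Y$2)*(Y$3))*((Y$2)^2+(Y$4)^2+2*(Y$9)*(Y$2)*(Y$4)) - (((Y$2)^2+(Y$3)^2+2*(Y$6)*(Y$2)*(Y$3)) + ((Y$2)^2+(Y$4)^2+2*(Y$9)*(Y$2)*(Y$4)) - ((Y$3)^2+(Y$4)^2+2*(Y$7)*(Y$3)*(Y$4)))^2}"
  have openS: "open S"
    unfolding S_def by (intro open_Collect_conj open_Collect_less continuous_intros)
  have XS: "X \<in> S"
    unfolding S_def using vars radii invd P1 P2 by simp
  have le: "F9 Y \<le> f9 Y" if "Y \<in> S" for Y
    using that hinge_main[of "Y$1" "Y$2" "Y$3" "Y$4" "Y$5" "Y$6" "Y$7" "Y$8" "Y$9"]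
    unfolding S_def F9_def f9_def by blast
  have eqX: "F9 X = f9 X"
    using hinge_main[OF radii invd P1 P2] cond unfolding F9_def f9_def vars by blast
  have gder: "((\<lambda>Y. f9 Y - F9 Y) has_derivative (\<lambda>h. Df h - DF h)) (at X)"
    by (rule has_derivative_diff[OF Df DF])
  have "(\<lambda>h. Df h - DF h) = (\<lambda>v. 0)"
  proof (rule differential_zero_maxmin[OF XS openS gder])
    show "(\<forall>y\<in>S. f9 y - F9 y \<le> f9 X - F9 X) \<or> (\<forall>y\<in>S. f9 X - F9 X \<le> f9 y - F9 y)"
      using le eqX by auto
  qed
  then have "Df = DF" unfolding fun_eq_iff by auto
  then show ?thesis using DF Df by blast
qed
end
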